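(* For every $\Sigma_1$-formula $A$, if $\mathsf{PA}_0\vdash A$ then $\mathsf{HA}_0\vdash A$. Consequently, for every $\Pi_2$-sentence $A$, if $\mathsf{PA}_0\vdash A$ then $\mathsf{HA}_0\vdash A$.
   Context: $\mathsf{HA}_0$ (resp. $\mathsf{PA}_0$) is the theory over intuitionistic (resp. classical) first-order logic with the basic axioms of arithmetic (successor, addition, multiplication, order) and induction restricted to formulas of the form $(D\to E)\to E$ with $D,E$ $\Sigma_1$-formulas. *)

theory Defs
  imports Main
begin

section \<open>First-order arithmetic: syntax (de Bruijn indices)\<close>

datatype trm = Var nat | Zero | Suc' trm | Plus trm trm | Times trm trm

datatype fm = Bot | Eq trm trm | Lt trm trm
  | Conj fm fm | Disj fm fm | Imp fm fm | All fm | Ex fm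

abbreviation Neg :: "fm \<Rightarrow> fm" where "Neg A \<equiv> Imp A Bot"
abbreviation Iff :: "fm \<Rightarrow> fm \<Rightarrow> fm" where "Iff A B \<equiv> Conj (Imp A B) (Imp B A)"

primrec trm_subst :: "(nat \<Rightarrow> trm) \<Rightarrow> trm \<Rightarrow> trm" where
  "trm_subst \<sigma> (Var n) = \<sigma> n"
| "trm_subst \<sigma> Zero = Zero"
| "trm_subst \<sigma> (Suc' t) = Suc' (trm_subst \<sigma> t)"
| "trm_subst \<sigma> (Plus s t) = Plus (trm_subst \<sigma> s) (trm_subst \<sigma> t)"
| "trm_subst \<sigma> (Times s t) = Times (trm_subst \<sigma> s) (trm_subst \<sigma> t)"

definition trm_lift :: "trm \<Rightarrow> trm" where
  "trm_lift t = trm_subst (\<lambda>n. Var (Suc n)) t"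

definition up :: "(nat \<Rightarrow> trm) \<Rightarrow> nat \<Rightarrow> trm" where
  "up \<sigma> n = (case n of 0 \<Rightarrow> Var 0 | Suc m \<Rightarrow> trm_lift (\<sigma> m))"

primrec fm_subst :: "(nat \<Rightarrow> trm) \<Rightarrow> fm \<Rightarrow> fm" where
  "fm_subst \<sigma> Bot = Bot"
| "fm_subst \<sigma> (Eq s t) = Eq (trm_subst \<sigma> s) (trm_subst \<sigma> t)"
| "fm_subst \<sigma> (Lt s t) = Lt (trm_subst \<sigma> s) (trm_subst \<sigma> t)"
| "fm_subst \<sigma> (Conj A B) = Conj (fm_subst \<sigma> A) (fm_subst \<sigma> B)"
| "fm_subst \<sigma> (Disj A B) = Disj (fm_subst \<sigma> A) (fm_subst \<sigma> B)"
| "fm_subst \<sigma> (Imp A B) = Imp (fm_subst \<sigma> A) (fm_subst \<sigma> B)"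
| "fm_subst \<sigma> (All A) = All (fm_subst (up \<sigma>) A)"
| "fm_subst \<sigma> (Ex A) = Ex (fm_subst (up \<sigma>) A)"

definition lift :: "fm \<Rightarrow> fm" where
  "lift A = fm_subst (\<lambda>n. Var (Suc n)) A"

definition inst :: "trm \<Rightarrow> fm \<Rightarrow> fm" where
  "inst t A = fm_subst (\<lambda>n. case n of 0 \<Rightarrow> t | Suc m \<Rightarrow> Var m) A"

primrec trm_closed_at :: "nat \<Rightarrow> trm \<Rightarrow> bool" where
  "trm_closed_at k (Var n) = (n < k)"
| "trm_closed_at k Zero = True"
| "trm_closed_at k (Suc' t) = trm_closed_at k t"
| "trm_closed_at k (Plus s t) = (trm_closed_at k s \<and> trm_closed_at k t)"
| "trm_closed_at k (Times s t) = (trm_closed_at k s \<and> trm_closed_at k t)"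

primrec closed_at :: "nat \<Rightarrow> fm \<Rightarrow> bool" where
  "closed_at k Bot = True"
| "closed_at k (Eq s t) = (trm_closed_at k s \<and> trm_closed_at k t)"
| "closed_at k (Lt s t) = (trm_closed_at k s \<and> trm_closed_at k t)"
| "closed_at k (Conj A B) = (closed_at k A \<and> closed_at k B)"
| "closed_at k (Disj A B) = (closed_at k A \<and> closed_at k B)"
| "closed_at k (Imp A B) = (closed_at k A \<and> closed_at k B)"
| "closed_at k (All A) = closed_at (Suc k) A"
| "closed_at k (Ex A) = closed_at (Suc k) A"

definition sentence :: "fm \<Rightarrow> bool" where
  "sentence A = closed_at 0 A"

definition BAll :: "trm \<Rightarrow> fm \<Rightarrow> fm" where
  "BAll t B = All (Imp (Lt (Var 0) (trm_lift t)) B)"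
definition BEx :: "trm \<Rightarrow> fm \<Rightarrow> fm" where
  "BEx t B = Ex (Conj (Lt (Var 0) (trm_lift t)) B)"

inductive Delta0 :: "fm \<Rightarrow> bool" where
  "Delta0 Bot"
| "Delta0 (Eq s t)"
| "Delta0 (Lt s t)"
| "Delta0 A \<Longrightarrow> Delta0 B \<Longrightarrow> Delta0 (Conj A B)"
| "Delta0 A \<Longrightarrow> Delta0 B \<Longrightarrow> Delta0 (Disj A B)"
| "Delta0 A \<Longrightarrow> Delta0 B \<Longrightarrow> Delta0 (Imp A B)"
| "Delta0 B \<Longrightarrow> Delta0 (BAll t B)"
| "Delta0 B \<Longrightarrow> Delta0 (BEx t B)"

inductive Sigma1 :: "fm \<Rightarrow> bool" where
  "Delta0 A \<Longrightarrow> Sigma1 A"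
| "Sigma1 A \<Longrightarrow> Sigma1 (Ex A)"

inductive Pi2 :: "fm \<Rightarrow> bool" where
  "Sigma1 A \<Longrightarrow> Pi2 A"
| "Pi2 A \<Longrightarrow> Pi2 (All A)"

abbreviation "vx \<equiv> Var 0"
abbreviation "vy \<equiv> Var 1"

text \<open>Basic axioms for successor, addition, multiplication and order (free variables are
  implicitly universally quantified, as generalisation is a rule).\<close>
definition basic_ax :: "fm set" where
  "basic_ax = {
     Neg (Eq (Suc' vx) Zero),
     Imp (Eq (Suc' vx) (Suc' vy)) (Eq vx vy),
     Eq (Plus vx Zero) vx,
     Eq (Plus vx (Suc' vy)) (Suc' (Plus vx vy)),
     Eq (Times vx Zero) Zero,
     Eq (Times vx (Suc' vy)) (Plus (Times vx vy) vx),
     Neg (Lt vx Zero),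
     Iff (Lt vx (Suc' vy)) (Disj (Lt vx vy) (Eq vx vy)) }"

text \<open>Induction axiom for A, where A's free variable 0 is the induction variable and the
  other free variables are parameters.\<close>
definition ind_ax :: "fm \<Rightarrow> fm" where
  "ind_ax A = Imp (Conj (inst Zero A)
                        (All (Imp A (fm_subst (\<lambda>n. case n of 0 \<Rightarrow> Suc' (Var 0) | Suc m \<Rightarrow> Var (Suc m)) A))))
                  (All A)"

definition axioms0 :: "fm set" where
  "axioms0 = basic_ax \<union> {ind_ax (Imp (Imp D E) E) | D E. Sigma1 D \<and> Sigma1 E}"

inductive ND :: "bool \<Rightarrow> fm set \<Rightarrow> fm list \<Rightarrow> fm \<Rightarrow> bool" where
  Hyp: "A \<in> set \<Gamma> \<Longrightarrow> ND c T \<Gamma> A"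
| Ax: "A \<in> T \<Longrightarrow> ND c T \<Gamma> A"
| BotE: "ND c T \<Gamma> Bot \<Longrightarrow> ND c T \<Gamma> A"
| LEM: "c \<Longrightarrow> ND c T \<Gamma> (Disj A (Neg A))"
| ConjI: "ND c T \<Gamma> A \<Longrightarrow> ND c T \<Gamma> B \<Longrightarrow> ND c T \<Gamma> (Conj A B)"
| ConjE1: "ND c T \<Gamma> (Conj A B) \<Longrightarrow> ND c T \<Gamma> A"
| ConjE2: "ND c T \<Gamma> (Conj A B) \<Longrightarrow> ND c T \<Gamma> B"
| DisjI1: "ND c T \<Gamma> A \<Longrightarrow> ND c T \<Gamma> (Disj A B)"
| DisjI2: "ND c T \<Gamma> B \<Longrightarrow> ND c T \<Gamma> (Disj A B)"
| DisjE: "ND c T \<Gamma> (Disj A B) \<Longrightarrow> ND c T (A # \<Gamma>) C \<Longrightarrow> ND c T (B # \<Gamma>) C \<Longrightarrow> ND c T \<Gamma> C"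
| ImpI: "ND c T (A # \<Gamma>) B \<Longrightarrow> ND c T \<Gamma> (Imp A B)"
| ImpE: "ND c T \<Gamma> (Imp A B) \<Longrightarrow> ND c T \<Gamma> A \<Longrightarrow> ND c T \<Gamma> B"
| AllI: "ND c T (map lift \<Gamma>) A \<Longrightarrow> ND c T \<Gamma> (All A)"
| AllE: "ND c T \<Gamma> (All A) \<Longrightarrow> ND c T \<Gamma> (inst t A)"
| ExI: "ND c T \<Gamma> (inst t A) \<Longrightarrow> ND c T \<Gamma> (Ex A)"
| ExE: "ND c T \<Gamma> (Ex A) \<Longrightarrow> ND c T (A # map lift \<Gamma>) (lift B) \<Longrightarrow> ND c T \<Gamma> B"
| EqRefl: "ND c T \<Gamma> (Eq t t)"
| EqSubst: "ND c T \<Gamma> (Eq s t) \<Longrightarrow> ND c T \<Gamma> (inst s A) \<Longrightarrow> ND c T \<Gamma> (inst t A)"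

definition HA0_proves :: "fm \<Rightarrow> bool" where
  "HA0_proves A = ND False axioms0 [] A"

definition PA0_proves :: "fm \<Rightarrow> bool" where
  "PA0_proves A = ND True axioms0 [] A"

end

theory Submission
  imports Defs
begin


lemma up_0[simp]: "up \<sigma> 0 = Var 0" by (simp add: up_def)
lemma up_Suc[simp]: "up \<sigma> (Suc n) = trm_lift (\<sigma> n)" by (simp add: up_def)

lemma trm_subst_comp: "trm_subst \<sigma> (trm_subst \<tau> t) = trm_subst (\<lambda>n. trm_subst \<sigma> (\<tau> n)) t"
  by (induction t) auto

lemma trm_subst_Var[simp]: "trm_subst Var t = t"
  by (induction t) auto

lemma trm_subst_cong: "(\<And>n. \<sigma> n = \<tau> n) \<Longrightarrow> trm_subst \<sigma> t = trm_subst \<tau> t"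
  by (metis ext)

lemma up_comp: "(\<lambda>n. trm_subst (up \<sigma>) (up \<tau> n)) = up (\<lambda>n. trm_subst \<sigma> (\<tau> n))"
  by (rule ext) (auto simp: up_def trm_lift_def trm_subst_comp split: nat.split)

lemma fm_subst_comp: "fm_subst \<sigma> (fm_subst \<tau> A) = fm_subst (\<lambda>n. trm_subst \<sigma> (\<tau> n)) A"
  by (induction A arbitrary: \<sigma> \<tau>) (auto simp: trm_subst_comp up_comp)

lemma up_Var: "up Var = Var"
  by (rule ext) (auto simp: up_def trm_lift_def split: nat.split)

lemma fm_subst_Var[simp]: "fm_subst Var A = A"
  by (induction A) (auto simp: up_Var)

lemma up_cong: "(\<And>n. n < k \<Longrightarrow> \<sigma> n = \<tau> n) \<Longrightarrow> n < Suc k \<Longrightarrow> up \<sigma> n = up \<tau> n"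
  by (auto simp: up_def split: nat.split)

lemma trm_subst_cong_closed: "trm_closed_at k t \<Longrightarrow> (\<And>n. n < k \<Longrightarrow> \<sigma> n = \<tau> n) \<Longrightarrow> trm_subst \<sigma> t = trm_subst \<tau> t"
  by (induction t) auto

lemma fm_subst_cong_closed: "closed_at k A \<Longrightarrow> (\<And>n. n < k \<Longrightarrow> \<sigma> n = \<tau> n) \<Longrightarrow> fm_subst \<sigma> A = fm_subst \<tau> A"
proof (induction A arbitrary: k \<sigma> \<tau>)
  case (All A) 
  have "fm_subst (up \<sigma>) A = fm_subst (up \<tau>) A"
    by (rule All.IH[of "Suc k"]) (use All.prems up_cong[of k \<sigma> \<tau>] in auto)
  then show ?case by simp
next
  case (Ex A)
  have "fm_subst (up \<sigma>) A = fm_subst (up \<tau>) A"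
    by (rule Ex.IH[of "Suc k"]) (use Ex.prems up_cong[of k \<sigma> \<tau>] in auto)
  then show ?case by simp
next
  case (Eq s t) then show ?case using trm_subst_cong_closed[of k s \<sigma> \<tau>] trm_subst_cong_closed[of k t \<sigma> \<tau>] by simp
next
  case (Lt s t) then show ?case using trm_subst_cong_closed[of k s \<sigma> \<tau>] trm_subst_cong_closed[of k t \<sigma> \<tau>] by simp
next
  case (Conj A B) then show ?case by (metis closed_at.simps(4) fm_subst.simps(4))
next
  case (Disj A B) then show ?case by (metis closed_at.simps(5) fm_subst.simps(5))
next
  case (Imp A B) then show ?case by (metis closed_at.simps(6) fm_subst.simps(6))
qed simp

definition shift :: "nat \<Rightarrow> trm" where "shift = (\<lambda>n. Var (Suc n))"
definition instf :: "trm \<Rightarrow> nat \<Rightarrow> trm" where "instf t = (\<lambda>n. case n of 0 \<Rightarrow> t | Suc m \<Rightarrow> Var m)"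
definition sucf :: "nat \<Rightarrow> trm" where "sucf = (\<lambda>n. case n of 0 \<Rightarrow> Suc' (Var 0) | Suc m \<Rightarrow> Var (Suc m))"

lemma fm_subst_ext: "(\<And>n. \<sigma> n = \<tau> n) \<Longrightarrow> fm_subst \<sigma> A = fm_subst \<tau> A"
  by (metis ext)

lemma lift_eq: "lift A = fm_subst shift A" by (simp add: lift_def shift_def)
lemma inst_eq: "inst t A = fm_subst (instf t) A" by (simp add: inst_def instf_def)
lemma trm_lift_eq: "trm_lift t = trm_subst shift t" by (simp add: trm_lift_def shift_def)

lemma ind_ax_eq: "ind_ax A = Imp (Conj (inst Zero A) (All (Imp A (fm_subst sucf A)))) (All A)"
  by (simp add: ind_ax_def sucf_def)

lemma up_eq: "up \<sigma> = (\<lambda>n. case n of 0 \<Rightarrow> Var 0 | Suc m \<Rightarrow> trm_subst shift (\<sigma> m))"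
  by (rule ext) (simp add: up_def trm_lift_eq split: nat.split)

lemmas subst_simps = fm_subst_comp trm_subst_comp up_eq shift_def instf_def sucf_def

lemma subst_lift: "fm_subst (up \<sigma>) (lift A) = lift (fm_subst \<sigma> A)"
  unfolding lift_eq by (simp add: subst_simps)

lemma subst_inst: "fm_subst \<sigma> (inst t A) = inst (trm_subst \<sigma> t) (fm_subst (up \<sigma>) A)"
  unfolding inst_eq by (simp add: fm_subst_comp) (rule fm_subst_ext, simp add: subst_simps split: nat.split)

lemma inst_lift[simp]: "inst t (lift A) = A"
  unfolding inst_eq lift_eq by (simp add: subst_simps)

lemma inst_Var0_liftup[simp]: "inst (Var 0) (fm_subst (up shift) A) = A"
proof -
  have "fm_subst (\<lambda>n. trm_subst (instf (Var 0)) (up shift n)) A = fm_subst Var A"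
    by (rule fm_subst_ext) (simp add: subst_simps split: nat.split)
  then show ?thesis unfolding inst_eq by (simp add: fm_subst_comp)
qed

lemma lift_All: "lift (All A) = All (fm_subst (up shift) A)" by (simp add: lift_eq)
lemma lift_Ex: "lift (Ex A) = Ex (fm_subst (up shift) A)" by (simp add: lift_eq)

lemma sucf_lift[simp]: "fm_subst sucf (lift A) = lift A"
  unfolding lift_eq by (simp add: subst_simps)

lemma subst_up_sucf: "fm_subst (up \<sigma>) (fm_subst sucf C) = fm_subst sucf (fm_subst (up \<sigma>) C)"
  by (simp add: fm_subst_comp) (rule fm_subst_ext, simp add: subst_simps split: nat.split)

lemma subst_ind_ax: "fm_subst \<sigma> (ind_ax C) = ind_ax (fm_subst (up \<sigma>) C)"
  unfolding ind_ax_eq by (simp add: subst_inst subst_up_sucf)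

lemma trm_subst_up_lift: "trm_subst (up \<sigma>) (trm_lift t) = trm_lift (trm_subst \<sigma> t)"
  by (simp add: trm_lift_eq subst_simps)

lemma subst_BAll: "fm_subst \<sigma> (BAll t B) = BAll (trm_subst \<sigma> t) (fm_subst (up \<sigma>) B)"
  by (simp add: BAll_def trm_subst_up_lift)
lemma subst_BEx: "fm_subst \<sigma> (BEx t B) = BEx (trm_subst \<sigma> t) (fm_subst (up \<sigma>) B)"
  by (simp add: BEx_def trm_subst_up_lift)

lemma Delta0_subst: "Delta0 A \<Longrightarrow> Delta0 (fm_subst \<sigma> A)"
proof (induction A arbitrary: \<sigma> rule: Delta0.induct)
  case (7 B t) then show ?case by (simp only: subst_BAll) (rule Delta0.intros)
next
  case (8 B t) then show ?case by (simp only: subst_BEx) (rule Delta0.intros)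
qed (auto intro: Delta0.intros)

lemma Sigma1_subst: "Sigma1 A \<Longrightarrow> Sigma1 (fm_subst \<sigma> A)"
  by (induction A arbitrary: \<sigma> rule: Sigma1.induct) (auto intro: Sigma1.intros Delta0_subst)

lemma Sigma1_lift: "Sigma1 A \<Longrightarrow> Sigma1 (lift A)"
  by (simp add: lift_def Sigma1_subst)



lemma ND_weaken: "ND c T \<Gamma> A \<Longrightarrow> set \<Gamma> \<subseteq> set \<Gamma>' \<Longrightarrow> ND c T \<Gamma>' A"
proof (induction arbitrary: \<Gamma>' rule: ND.induct)
  case (Hyp A \<Gamma> c T) then show ?case by (auto intro: ND.Hyp)
next
  case (DisjE c T \<Gamma> A B C) then show ?case
    by (metis ND.DisjE insert_mono list.simps(15))
next
  case (ImpI c T A \<Gamma> B) then show ?case by (metis ND.ImpI insert_mono list.simps(15))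
next
  case (AllI c T \<Gamma> A) then show ?case by (metis ND.AllI image_mono list.set_map)
next
  case (ExE c T \<Gamma> A B) 
  have "set (A # map lift \<Gamma>) \<subseteq> set (A # map lift \<Gamma>')" using ExE.prems by auto
  then show ?case using ExE by (metis ND.ExE)
next
  case (EqSubst c T \<Gamma> s t A) then show ?case by (metis ND.EqSubst)
qed (auto intro: ND.intros)

lemma ND_nil: "ND c T [] A \<Longrightarrow> ND c T \<Gamma> A"
  using ND_weaken by fastforce

lemma ND_subst: "ND c T \<Gamma> A \<Longrightarrow> (\<And>\<sigma> B \<Delta>. B \<in> T \<Longrightarrow> ND c T \<Delta> (fm_subst \<sigma> B))
   \<Longrightarrow> ND c T (map (fm_subst \<sigma>) \<Gamma>) (fm_subst \<sigma> A)"
proof (induction arbitrary: \<sigma> rule: ND.induct)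
  case (Hyp A \<Gamma> c T) then show ?case by (auto intro: ND.Hyp)
next
  case (AllI c T \<Gamma> A)
  have "ND c T (map (fm_subst (up \<sigma>)) (map lift \<Gamma>)) (fm_subst (up \<sigma>) A)" using AllI by blast
  moreover have "map (fm_subst (up \<sigma>)) (map lift \<Gamma>) = map lift (map (fm_subst \<sigma>) \<Gamma>)"
    by (simp add: subst_lift)
  ultimately have "ND c T (map lift (map (fm_subst \<sigma>) \<Gamma>)) (fm_subst (up \<sigma>) A)" by metis
  then show ?case by (simp only: fm_subst.simps) (rule ND.AllI)
next
  case (AllE c T \<Gamma> A t)
  then show ?case by (simp add: subst_inst ND.AllE)
next
  case (ExI c T \<Gamma> t A)
  then show ?case by (simp add: subst_inst) (metis ND.ExI)
next
  case (ExE c T \<Gamma> A B)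
  have "ND c T (map (fm_subst (up \<sigma>)) (A # map lift \<Gamma>)) (fm_subst (up \<sigma>) (lift B))" using ExE by blast
  moreover have "map (fm_subst (up \<sigma>)) (map lift \<Gamma>) = map lift (map (fm_subst \<sigma>) \<Gamma>)"
    by (simp add: subst_lift)
  ultimately have "ND c T (fm_subst (up \<sigma>) A # map lift (map (fm_subst \<sigma>) \<Gamma>)) (lift (fm_subst \<sigma> B))"
    by (metis list.simps(9) subst_lift)
  then show ?case using ExE ND.ExE by fastforce
next
  case (EqSubst c T \<Gamma> s t A)
  then show ?case by (simp add: subst_inst) (metis ND.EqSubst)
qed (auto intro: ND.intros)

lemma basic_closed: "B \<in> basic_ax \<Longrightarrow> closed_at 2 B"
  by (auto simp: basic_ax_def)

lemma inst2: "closed_at 2 B \<Longrightarrow> inst (\<sigma> 0) (fm_subst (up (instf (\<sigma> 1))) B) = fm_subst \<sigma> B"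
  unfolding inst_eq
  apply (simp add: fm_subst_comp) 
  apply (rule fm_subst_cong_closed[of 2], assumption)
  subgoal for n by (cases n) (auto simp: less_Suc_eq instf_def trm_lift_eq subst_simps)
  done

lemma ax_subst: "B \<in> axioms0 \<Longrightarrow> ND c axioms0 \<Delta> (fm_subst \<sigma> B)"
proof -
  assume B: "B \<in> axioms0"
  show ?thesis
  proof (cases "B \<in> basic_ax")
    case True
    have "ND c axioms0 \<Delta> (All (All B))" by (intro ND.AllI) (rule ND.Ax, fact)
    then have "ND c axioms0 \<Delta> (inst (\<sigma> 1) (All B))" by (rule ND.AllE)
    then have "ND c axioms0 \<Delta> (All (fm_subst (up (instf (\<sigma> 1))) B))" by (simp add: inst_eq)
    then have "ND c axioms0 \<Delta> (inst (\<sigma> 0) (fm_subst (up (instf (\<sigma> 1))) B))" by (rule ND.AllE)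
    then show ?thesis using inst2[OF basic_closed[OF True]] by simp
  next
    case False
    then obtain D E where "B = ind_ax (Imp (Imp D E) E)" "Sigma1 D" "Sigma1 E" using B by (auto simp: axioms0_def)
    then show ?thesis by (auto simp: subst_ind_ax axioms0_def intro!: ND.Ax Sigma1_subst)
  qed
qed

lemma HA_subst: "ND c axioms0 \<Gamma> A \<Longrightarrow> ND c axioms0 (map (fm_subst \<sigma>) \<Gamma>) (fm_subst \<sigma> A)"
  using ND_subst ax_subst by blast

lemma HA_inst: "ND c axioms0 [] A \<Longrightarrow> ND c axioms0 \<Gamma> (fm_subst \<sigma> A)"
  using HA_subst[of c "[]" A \<sigma>] ND_nil by fastforce

lemma HA_lift: "ND c axioms0 \<Gamma> A \<Longrightarrow> ND c axioms0 (map lift \<Gamma>) (lift A)"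
  unfolding lift_eq using HA_subst by (metis lift_eq lift_def)

lemma cut: "ND c T \<Gamma> A \<Longrightarrow> ND c T (A # \<Gamma>) B \<Longrightarrow> ND c T \<Gamma> B"
  by (meson ND.ImpE ND.ImpI)

lemma hyp0: "ND c T (A # \<Gamma>) A" by (rule ND.Hyp) simp
lemma hyp1: "ND c T (B # A # \<Gamma>) A" by (rule ND.Hyp) simp
lemma hyp2: "ND c T (C # B # A # \<Gamma>) A" by (rule ND.Hyp) simp
lemma hyp3: "ND c T (D # C # B # A # \<Gamma>) A" by (rule ND.Hyp) simp
lemma hyp4: "ND c T (E # D # C # B # A # \<Gamma>) A" by (rule ND.Hyp) simp

lemma wk: "ND c T \<Gamma> A \<Longrightarrow> ND c T (B # \<Gamma>) A" by (erule ND_weaken) auto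
lemma wk2: "ND c T \<Gamma> A \<Longrightarrow> ND c T (C # B # \<Gamma>) A" by (erule ND_weaken) auto
lemma wk3: "ND c T \<Gamma> A \<Longrightarrow> ND c T (D # C # B # \<Gamma>) A" by (erule ND_weaken) auto

lemma imp_mp: "ND c T \<Gamma> (Imp A B) \<Longrightarrow> ND c T \<Gamma> A \<Longrightarrow> ND c T \<Gamma> B" by (rule ND.ImpE)

lemma use_imp: "ND c T [] (Imp A B) \<Longrightarrow> ND c T \<Gamma> A \<Longrightarrow> ND c T \<Gamma> B"
  using ND.ImpE ND_nil by blast

lemma iffD1': "ND c T \<Gamma> (Iff A B) \<Longrightarrow> ND c T \<Gamma> A \<Longrightarrow> ND c T \<Gamma> B"
  using ND.ConjE1 ND.ImpE by blast
lemma iffD2': "ND c T \<Gamma> (Iff A B) \<Longrightarrow> ND c T \<Gamma> B \<Longrightarrow> ND c T \<Gamma> A"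
  using ND.ConjE2 ND.ImpE by blast

lemma allE_var0: "ND c T \<Gamma> (lift (All A)) \<Longrightarrow> ND c T \<Gamma> A"
  using ND.AllE[of c T \<Gamma> "fm_subst (up shift) A" "Var 0"] by (simp add: lift_All)

lemma exI_var0: "ND c T \<Gamma> A \<Longrightarrow> ND c T \<Gamma> (lift (Ex A))"
  using ND.ExI[of c T \<Gamma> "Var 0" "fm_subst (up shift) A"] by (simp add: lift_Ex)

lemma all_open: "ND c axioms0 \<Gamma> (All A) \<Longrightarrow> ND c axioms0 (map lift \<Gamma>) A"
  using HA_lift allE_var0 by blast



abbreviation HA :: "fm list \<Rightarrow> fm \<Rightarrow> bool" where "HA \<equiv> ND False axioms0"

lemma instf_0[simp]: "instf t 0 = t" and instf_Suc[simp]: "instf t (Suc n) = Var n"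
  by (simp_all add: instf_def)
lemma sucf_0[simp]: "sucf 0 = Suc' (Var 0)" and sucf_Suc[simp]: "sucf (Suc n) = Var (Suc n)"
  by (simp_all add: sucf_def)
lemma instf_num[simp]: "instf t (numeral k) = Var (pred_numeral k)"
  by (simp add: numeral_eq_Suc)
lemma sucf_num[simp]: "sucf (numeral k) = Var (numeral k)"
  by (simp add: numeral_eq_Suc)
lemma trm_lift_Var[simp]: "trm_lift (Var n) = Var (Suc n)" by (simp add: trm_lift_def)
lemma trm_lift_Zero[simp]: "trm_lift Zero = Zero" by (simp add: trm_lift_def)
lemma trm_lift_Suc[simp]: "trm_lift (Suc' t) = Suc' (trm_lift t)" by (simp add: trm_lift_def)
lemma inst_trm_lift[simp]: "trm_subst (instf u) (trm_lift s) = s"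
  by (simp add: trm_lift_eq trm_subst_comp shift_def)
lemma sucf_trm_lift[simp]: "trm_subst sucf (trm_lift s) = trm_lift s"
  by (simp add: trm_lift_eq trm_subst_comp shift_def)

lemmas inst_simp = inst_eq

lemma ind_transfer:
  assumes eq: "ND c axioms0 [] (Iff P Q)" and iq: "ND c axioms0 \<Gamma> (ind_ax Q)"
  shows "ND c axioms0 \<Gamma> (ind_ax P)"
proof -
  let ?H = "Conj (inst Zero P) (All (Imp P (fm_subst sucf P)))"
  have e0: "ND c axioms0 \<Delta> (Iff (inst Zero P) (inst Zero Q))" for \<Delta>
    using HA_inst[OF eq, of \<Delta> "instf Zero"] by (simp add: inst_eq)
  have eS: "ND c axioms0 \<Delta> (Iff (fm_subst sucf P) (fm_subst sucf Q))" for \<Delta>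
    using HA_inst[OF eq, of \<Delta> "sucf"] by simp
  have e: "ND c axioms0 \<Delta> (Iff P Q)" for \<Delta> using eq ND_nil by blast
  have q0: "ND c axioms0 (?H # \<Gamma>) (inst Zero Q)"
    by (rule iffD1'[OF e0]) (rule ND.ConjE1, rule hyp0)
  have st: "ND c axioms0 (?H # \<Gamma>) (All (Imp Q (fm_subst sucf Q)))"
  proof (rule ND.AllI, rule ND.ImpI)
    let ?L = "Q # map lift (?H # \<Gamma>)"
    have "ND c axioms0 ?L (lift ?H)" by (rule ND.Hyp) simp
    then have "ND c axioms0 ?L (lift (All (Imp P (fm_subst sucf P))))"
      by (simp add: lift_eq) (rule ND.ConjE2)
    then have i: "ND c axioms0 ?L (Imp P (fm_subst sucf P))" by (rule allE_var0)
    have "ND c axioms0 ?L P" by (rule iffD2'[OF e], rule hyp0)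
    then have "ND c axioms0 ?L (fm_subst sucf P)" by (rule ND.ImpE[OF i])
    then show "ND c axioms0 ?L (fm_subst sucf Q)" by (rule iffD1'[OF eS])
  qed
  have aq: "ND c axioms0 (?H # \<Gamma>) (All Q)"
    unfolding ind_ax_eq
    by (rule ND.ImpE[OF wk[OF iq[unfolded ind_ax_eq]]], rule ND.ConjI, rule q0, rule st)
  have "ND c axioms0 (?H # \<Gamma>) (All P)"
  proof (rule ND.AllI)
    have "ND c axioms0 (map lift (?H # \<Gamma>)) Q" by (rule all_open[OF aq])
    then show "ND c axioms0 (map lift (?H # \<Gamma>)) P" by (rule iffD2'[OF e])
  qed
  then show ?thesis unfolding ind_ax_eq by (rule ND.ImpI)
qed

lemma Sigma1_Bot: "Sigma1 Bot" by (intro Sigma1.intros Delta0.intros)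

lemma ind_rule:
  assumes S: "Sigma1 E" and b: "HA \<Gamma> (inst Zero E)" and s: "HA (map lift \<Gamma>) (Imp E (fm_subst sucf E))"
  shows "HA \<Gamma> (All E)"
proof -
  have eq: "HA [] (Iff E (Imp (Imp Bot E) E))"
    apply (rule ND.ConjI)
     apply (rule ND.ImpI, rule ND.ImpI, rule hyp1)
    apply (rule ND.ImpI, rule ND.ImpE[OF hyp0], rule ND.ImpI, rule ND.BotE, rule hyp0)
    done
  have "HA \<Gamma> (ind_ax (Imp (Imp Bot E) E))" by (rule ND.Ax) (unfold axioms0_def, rule UnI2, use S Sigma1_Bot in blast)
  then have "HA \<Gamma> (ind_ax E)" by (rule ind_transfer[OF eq])
  then show ?thesis unfolding ind_ax_eq by (rule ND.ImpE) (intro ND.ConjI b ND.AllI s)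
qed

lemma ind_open:
  assumes "Sigma1 E" "HA [] (inst Zero E)" "HA [] (Imp E (fm_subst sucf E))"
  shows "HA [] E"
proof -
  have "HA [] (All E)" by (rule ind_rule[OF assms(1,2)]) (use assms(3) in simp)
  then show ?thesis using all_open[of False "[]" E] by simp
qed

lemma D0S: "Delta0 A \<Longrightarrow> Sigma1 A" by (rule Sigma1.intros)

lemma eqsub: "ND c T \<Gamma> (Eq s t) \<Longrightarrow> ND c T \<Gamma> X \<Longrightarrow> X = inst s A \<Longrightarrow> inst t A = Y \<Longrightarrow> ND c T \<Gamma> Y"
  using ND.EqSubst by blast

lemma bax: "B \<in> basic_ax \<Longrightarrow> fm_subst \<sigma> B = X \<Longrightarrow> HA \<Gamma> X"
  using ax_subst[of B False \<Gamma> \<sigma>] by (auto simp: axioms0_def)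

lemma lt0: "HA \<Gamma> (Lt s Zero) \<Longrightarrow> HA \<Gamma> X"
  by (rule ND.BotE, rule ND.ImpE[OF bax[where B="Neg (Lt vx Zero)" and \<sigma>="\<lambda>n. s"]]) (auto simp: basic_ax_def)

lemma ltS_iff: "HA \<Gamma> (Iff (Lt s (Suc' t)) (Disj (Lt s t) (Eq s t)))"
  by (rule bax[where B="Iff (Lt vx (Suc' vy)) (Disj (Lt vx vy) (Eq vx vy))" and \<sigma>="\<lambda>n. [s,t] ! n"]) (auto simp: basic_ax_def)

lemma ltS_E: "HA \<Gamma> (Lt s (Suc' t)) \<Longrightarrow> HA \<Gamma> (Disj (Lt s t) (Eq s t))"
  by (rule iffD1'[OF ltS_iff])
lemma ltS_I1: "HA \<Gamma> (Lt s t) \<Longrightarrow> HA \<Gamma> (Lt s (Suc' t))"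
  by (rule iffD2'[OF ltS_iff], rule ND.DisjI1)
lemma ltS_I2: "HA \<Gamma> (Eq s t) \<Longrightarrow> HA \<Gamma> (Lt s (Suc' t))"
  by (rule iffD2'[OF ltS_iff], rule ND.DisjI2)
lemma lt_Suc_self: "HA \<Gamma> (Lt s (Suc' s))" by (rule ltS_I2, rule ND.EqRefl)

lemma eq_sym: "HA \<Gamma> (Eq s t) \<Longrightarrow> HA \<Gamma> (Eq t s)"
  by (erule eqsub[where A="Eq (Var 0) (trm_lift s)"], rule ND.EqRefl) (simp_all add: inst_eq)

lemma trans_open: "HA [] (Imp (Lt (Var 1) (Var 2)) (Imp (Lt (Var 2) (Var 0)) (Lt (Var 1) (Var 0))))"
proof (rule ind_open)
  show "Sigma1 (Imp (Lt (Var 1) (Var 2)) (Imp (Lt (Var 2) (Var 0)) (Lt (Var 1) (Var 0))))"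
    by (intro D0S Delta0.intros)
  show "HA [] (inst Zero (Imp (Lt (Var 1) (Var 2)) (Imp (Lt (Var 2) (Var 0)) (Lt (Var 1) (Var 0)))))"
    by (simp add: inst_eq) (intro ND.ImpI, rule lt0, rule hyp0)
  show "HA [] (Imp (Imp (Lt (Var 1) (Var 2)) (Imp (Lt (Var 2) (Var 0)) (Lt (Var 1) (Var 0))))
     (fm_subst sucf (Imp (Lt (Var 1) (Var 2)) (Imp (Lt (Var 2) (Var 0)) (Lt (Var 1) (Var 0))))))"
    apply simp
    apply (intro ND.ImpI)
    apply (rule ND.DisjE[OF ltS_E[OF hyp0]])
     apply (rule ltS_I1)
     apply (rule ND.ImpE[OF ND.ImpE[OF hyp3 hyp2] hyp0])
    apply (rule ltS_I1)
    apply (rule eqsub[OF hyp0 hyp2, where A="Lt (Var 2) (Var 0)"])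
     apply (simp_all add: inst_eq)
    done
qed

lemma lt_trans: "HA \<Gamma> (Lt r s) \<Longrightarrow> HA \<Gamma> (Lt s t) \<Longrightarrow> HA \<Gamma> (Lt r t)"
  using HA_inst[OF trans_open, of \<Gamma> "\<lambda>n. [t,r,s] ! n"] by simp (meson ND.ImpE)

lemma irrefl_open: "HA [] (Neg (Lt (Var 0) (Var 0)))"
proof (rule ind_open)
  show "Sigma1 (Neg (Lt (Var 0) (Var 0)))" by (intro D0S Delta0.intros)
  show "HA [] (inst Zero (Neg (Lt (Var 0) (Var 0))))"
    by (simp add: inst_eq) (intro ND.ImpI, rule lt0, rule hyp0)
  show "HA [] (Imp (Neg (Lt (Var 0) (Var 0))) (fm_subst sucf (Neg (Lt (Var 0) (Var 0)))))"
    apply simp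
    apply (intro ND.ImpI)
    apply (rule ND.DisjE[OF ltS_E[OF hyp0]])
     apply (rule ND.ImpE[OF hyp2])
     apply (rule lt_trans[OF lt_Suc_self hyp0])
    apply (rule ND.ImpE[OF hyp2])
    apply (rule eqsub[OF hyp0 lt_Suc_self, where A="Lt (Var 1) (Var 0)"])
     apply (simp_all add: inst_eq)
    done
qed

lemma lt_irrefl: "HA \<Gamma> (Lt t t) \<Longrightarrow> HA \<Gamma> X"
  using HA_inst[OF irrefl_open, of \<Gamma> "\<lambda>n. t"] by simp (meson ND.ImpE ND.BotE)

lemma zero_open: "HA [] (Disj (Eq Zero (Var 0)) (Lt Zero (Var 0)))"
proof (rule ind_open)
  show "Sigma1 (Disj (Eq Zero (Var 0)) (Lt Zero (Var 0)))" by (intro D0S Delta0.intros)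
  show "HA [] (inst Zero (Disj (Eq Zero (Var 0)) (Lt Zero (Var 0))))"
    by (simp add: inst_eq) (rule ND.DisjI1, rule ND.EqRefl)
  show "HA [] (Imp (Disj (Eq Zero (Var 0)) (Lt Zero (Var 0))) (fm_subst sucf (Disj (Eq Zero (Var 0)) (Lt Zero (Var 0)))))"
    apply simp
    apply (intro ND.ImpI)
    apply (rule ND.DisjE[OF hyp0])
     apply (rule ND.DisjI2, rule ltS_I2, rule hyp0)
    apply (rule ND.DisjI2, rule ltS_I1, rule hyp0)
    done
qed

lemma succle_open: "HA [] (Imp (Lt (Var 1) (Var 0)) (Disj (Lt (Suc' (Var 1)) (Var 0)) (Eq (Suc' (Var 1)) (Var 0))))"
proof (rule ind_open)
  show "Sigma1 (Imp (Lt (Var 1) (Var 0)) (Disj (Lt (Suc' (Var 1)) (Var 0)) (Eq (Suc' (Var 1)) (Var 0))))" by (intro D0S Delta0.intros)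
  show "HA [] (inst Zero (Imp (Lt (Var 1) (Var 0)) (Disj (Lt (Suc' (Var 1)) (Var 0)) (Eq (Suc' (Var 1)) (Var 0)))))"
    by (simp add: inst_eq) (intro ND.ImpI, rule lt0, rule hyp0)
  show "HA [] (Imp (Imp (Lt (Var 1) (Var 0)) (Disj (Lt (Suc' (Var 1)) (Var 0)) (Eq (Suc' (Var 1)) (Var 0))))
     (fm_subst sucf (Imp (Lt (Var 1) (Var 0)) (Disj (Lt (Suc' (Var 1)) (Var 0)) (Eq (Suc' (Var 1)) (Var 0))))))"
    apply simp
    apply (intro ND.ImpI)
    apply (rule ND.DisjE[OF ltS_E[OF hyp0]])
     apply (rule ND.DisjE[OF ND.ImpE[OF hyp2 hyp0]])
      apply (rule ND.DisjI1, rule ltS_I1, rule hyp0)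
     apply (rule ND.DisjI1, rule ltS_I2, rule hyp0)
    apply (rule ND.DisjI2)
    apply (rule eqsub[OF hyp0 ND.EqRefl, where A="Eq (Suc' (Var 2)) (Suc' (Var 0))"])
     apply (simp_all add: inst_eq)
    done
qed

lemma succle: "HA \<Gamma> (Lt s t) \<Longrightarrow> HA \<Gamma> (Disj (Lt (Suc' s) t) (Eq (Suc' s) t))"
  using HA_inst[OF succle_open, of \<Gamma> "\<lambda>n. [t,s] ! n"] by simp (meson ND.ImpE)

lemma trich_open: "HA [] (Disj (Lt (Var 1) (Var 0)) (Disj (Eq (Var 1) (Var 0)) (Lt (Var 0) (Var 1))))"
proof (rule ind_open)
  show "Sigma1 (Disj (Lt (Var 1) (Var 0)) (Disj (Eq (Var 1) (Var 0)) (Lt (Var 0) (Var 1))))" by (intro D0S Delta0.intros)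
  show "HA [] (inst Zero (Disj (Lt (Var 1) (Var 0)) (Disj (Eq (Var 1) (Var 0)) (Lt (Var 0) (Var 1)))))"
    apply (simp add: inst_eq)
    apply (rule ND.DisjE[OF zero_open])
     apply (rule ND.DisjI2, rule ND.DisjI1, rule eq_sym, rule hyp0)
    apply (rule ND.DisjI2, rule ND.DisjI2, rule hyp0)
    done
  show "HA [] (Imp (Disj (Lt (Var 1) (Var 0)) (Disj (Eq (Var 1) (Var 0)) (Lt (Var 0) (Var 1))))
     (fm_subst sucf (Disj (Lt (Var 1) (Var 0)) (Disj (Eq (Var 1) (Var 0)) (Lt (Var 0) (Var 1))))))"
    apply simp
    apply (intro ND.ImpI)
    apply (rule ND.DisjE[OF hyp0])
     apply (rule ND.DisjI1, rule ltS_I1, rule hyp0)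
    apply (rule ND.DisjE[OF hyp0])
     apply (rule ND.DisjI1, rule ltS_I2, rule hyp0)
    apply (rule ND.DisjE[OF succle[OF hyp0]])
     apply (rule ND.DisjI2, rule ND.DisjI2, rule hyp0)
    apply (rule ND.DisjI2, rule ND.DisjI1, rule eq_sym, rule hyp0)
    done
qed

lemma trich: "HA \<Gamma> (Disj (Lt s t) (Disj (Eq s t) (Lt t s)))"
  using HA_inst[OF trich_open, of \<Gamma> "\<lambda>n. [t,s] ! n"] by simp

lemma dec_eq: "HA \<Gamma> (Disj (Eq s t) (Neg (Eq s t)))"
  apply (rule ND.DisjE[OF trich[of \<Gamma> s t]])
   apply (rule ND.DisjI2, rule ND.ImpI, rule lt_irrefl[of _ t])
   apply (rule eqsub[OF hyp0 hyp1, where A="Lt (Var 0) (trm_lift t)"], simp_all add: inst_eq)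
  apply (rule ND.DisjE[OF hyp0])
   apply (rule ND.DisjI1, rule hyp0)
  apply (rule ND.DisjI2, rule ND.ImpI, rule lt_irrefl[of _ t])
  apply (rule eqsub[OF hyp0 hyp1, where A="Lt (trm_lift t) (Var 0)"], simp_all add: inst_eq)
  done

lemma dec_lt: "HA \<Gamma> (Disj (Lt s t) (Neg (Lt s t)))"
  apply (rule ND.DisjE[OF trich[of \<Gamma> s t]])
   apply (rule ND.DisjI1, rule hyp0)
  apply (rule ND.DisjE[OF hyp0])
   apply (rule ND.DisjI2, rule ND.ImpI, rule lt_irrefl[of _ t])
   apply (rule eqsub[OF hyp1 hyp0, where A="Lt (Var 0) (trm_lift t)"], simp_all add: inst_eq)
  apply (rule ND.DisjI2, rule ND.ImpI, rule lt_irrefl[of _ t])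
  apply (rule lt_trans[OF hyp1 hyp0])
  done



lemma up_1[simp]: "up \<sigma> 1 = trm_lift (\<sigma> 0)" by (simp add: up_def)
lemma instf_1[simp]: "instf t 1 = Var 0" by (simp add: instf_def)
lemma sucf_1[simp]: "sucf 1 = Var 1" by (simp add: sucf_def)
lemma shift_app[simp]: "shift n = Var (Suc n)" by (simp add: shift_def)

definition rho :: "nat \<Rightarrow> trm" where "rho = (\<lambda>k. case k of 0 \<Rightarrow> Var 0 | Suc m \<Rightarrow> Var (Suc (Suc (Suc m))))"

lemma B1_sucf[simp]: "fm_subst (up sucf) (fm_subst (up shift) B) = fm_subst (up shift) B"
  by (simp add: fm_subst_comp) (rule fm_subst_ext, simp add: up_def trm_lift_def split: nat.split)
lemma B1_inst[simp]: "fm_subst (up (instf t)) (fm_subst (up shift) B) = B"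
proof -
  have "fm_subst (up (instf t)) (fm_subst (up shift) B) = fm_subst Var B"
    by (simp only: fm_subst_comp) (rule fm_subst_ext, simp add: up_def trm_lift_def split: nat.split)
  then show ?thesis by simp
qed
lemma rho_1[simp]: "inst (Var (Suc 0)) (fm_subst rho B) = lift B"
  unfolding inst_eq lift_eq
  by (simp add: fm_subst_comp) (rule fm_subst_ext, simp add: rho_def split: nat.split)
lemma rho_0[simp]: "inst (Var 0) (fm_subst rho B) = fm_subst (up shift) B"
  unfolding inst_eq
  by (simp add: fm_subst_comp) (rule fm_subst_ext, simp add: rho_def up_def trm_lift_def split: nat.split)
lemma B1_inst0[simp]: "fm_subst (instf (Var 0)) (fm_subst (up shift) B) = B"
  using inst_Var0_liftup[of B] by (simp add: inst_eq)
lemma lift_Neg: "lift (Neg B) = Neg (lift B)" by (simp add: lift_eq)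
lemma lift_Disj: "lift (Disj A B) = Disj (lift A) (lift B)" by (simp add: lift_eq)
lemma lift_Conj: "lift (Conj A B) = Conj (lift A) (lift B)" by (simp add: lift_eq)
lemma lift_Imp: "lift (Imp A B) = Imp (lift A) (lift B)" by (simp add: lift_eq)
lemma lift_Bot: "lift Bot = Bot" by (simp add: lift_eq)
lemma inst_Imp[simp]: "inst t (Imp A B) = Imp (inst t A) (inst t B)" by (simp add: inst_eq)
lemma inst_Conj[simp]: "inst t (Conj A B) = Conj (inst t A) (inst t B)" by (simp add: inst_eq)
lemma inst_Disj[simp]: "inst t (Disj A B) = Disj (inst t A) (inst t B)" by (simp add: inst_eq)
lemma inst_Bot[simp]: "inst t Bot = Bot" by (simp add: inst_eq)
lemmas lift_conn = lift_Neg lift_Disj lift_Conj lift_Imp lift_Bot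

lemma lt_SucE: "HA \<Gamma> (Lt s (Suc' t)) \<Longrightarrow> HA (Lt s t # \<Gamma>) C \<Longrightarrow> HA (Eq s t # \<Gamma>) C \<Longrightarrow> HA \<Gamma> C"
  by (rule ND.DisjE[OF ltS_E])

lemma dich_all_open:
  assumes D: "Delta0 B" and dec: "HA [] (Disj B (Neg B))"
  shows "HA [] (Disj (All (Imp (Lt (Var 0) (Var 1)) (fm_subst (up shift) B)))
                     (Ex (Conj (Lt (Var 0) (Var 1)) (Neg (fm_subst (up shift) B)))))"
    (is "HA [] ?C")
proof (rule ind_open)
  have d: "Delta0 (fm_subst (up shift) B)" by (rule Delta0_subst[OF D])
  have "Delta0 (Disj (BAll (Var 0) (fm_subst (up shift) B)) (BEx (Var 0) (Neg (fm_subst (up shift) B))))"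
    by (intro Delta0.intros d)
  then have "Delta0 ?C" by (simp add: BAll_def BEx_def)
  then show "Sigma1 ?C" by (rule D0S)
  show "HA [] (inst Zero ?C)"
    apply (simp add: inst_eq)
    apply (rule ND.DisjI1, rule ND.AllI, rule ND.ImpI, rule lt0, rule hyp0)
    done
  show "HA [] (Imp ?C (fm_subst sucf ?C))"
    apply simp
    apply (rule ND.ImpI)
    apply (rule ND.DisjE[OF hyp0])
     apply (rule ND.DisjE[OF ND_nil[OF dec]])
      apply (rule ND.DisjI1, rule ND.AllI, rule ND.ImpI)
      apply (rule lt_SucE[OF hyp0])
       apply (rule ND.ImpE[OF allE_var0[of _ _ _ "Imp (Lt (Var 0) (Var (Suc 0))) (fm_subst (up shift) B)"]])
        apply (rule ND.Hyp, simp)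
       apply (rule hyp0)
      apply (rule eqsub[OF eq_sym[OF hyp0], where A="fm_subst rho B" and X="lift B"])
        apply (rule ND.Hyp, simp)
       apply simp
      apply simp
     apply (rule ND.DisjI2, rule ND.ExI[where t="Var 0"])
     apply (simp add: inst_eq)
     apply (rule ND.ConjI, rule lt_Suc_self, rule hyp0)
    apply (rule ND.ExE[OF hyp0])
    apply (simp only: lift_Disj)
    apply (rule ND.DisjI2)
    apply (rule exI_var0)
    apply (rule ND.ConjI)
     apply (rule ltS_I1, rule ND.ConjE1, rule hyp0)
    apply (rule ND.ConjE2, rule hyp0)
    done
qed

lemma dich_ex_open:
  assumes D: "Delta0 B" and dec: "HA [] (Disj B (Neg B))"
  shows "HA [] (Disj (Ex (Conj (Lt (Var 0) (Var 1)) (fm_subst (up shift) B)))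
                     (All (Imp (Lt (Var 0) (Var 1)) (Neg (fm_subst (up shift) B)))))"
    (is "HA [] ?C")
proof (rule ind_open)
  have d: "Delta0 (fm_subst (up shift) B)" by (rule Delta0_subst[OF D])
  have "Delta0 (Disj (BEx (Var 0) (fm_subst (up shift) B)) (BAll (Var 0) (Neg (fm_subst (up shift) B))))"
    by (intro Delta0.intros d)
  then have "Delta0 ?C" by (simp add: BAll_def BEx_def)
  then show "Sigma1 ?C" by (rule D0S)
  show "HA [] (inst Zero ?C)"
    apply (simp add: inst_eq)
    apply (rule ND.DisjI2, rule ND.AllI, rule ND.ImpI, rule lt0, rule hyp0)
    done
  show "HA [] (Imp ?C (fm_subst sucf ?C))"
    apply simp
    apply (rule ND.ImpI)
    apply (rule ND.DisjE[OF hyp0])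
     apply (rule ND.ExE[OF hyp0])
     apply (simp only: lift_Disj)
     apply (rule ND.DisjI1)
     apply (rule exI_var0)
     apply (rule ND.ConjI)
      apply (rule ltS_I1, rule ND.ConjE1, rule hyp0)
     apply (rule ND.ConjE2, rule hyp0)
    apply (rule ND.DisjE[OF ND_nil[OF dec]])
     apply (rule ND.DisjI1, rule ND.ExI[where t="Var 0"])
     apply (simp add: inst_eq)
     apply (rule ND.ConjI, rule lt_Suc_self, rule hyp0)
    apply (rule ND.DisjI2, rule ND.AllI, rule ND.ImpI)
    apply (rule lt_SucE[OF hyp0])
     apply (rule ND.ImpE[OF allE_var0[of _ _ _ "Imp (Lt (Var 0) (Var (Suc 0))) (Neg (fm_subst (up shift) B))"]])
      apply (rule ND.Hyp, simp)
     apply (rule hyp0)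
    apply (rule eqsub[OF eq_sym[OF hyp0], where A="Neg (fm_subst rho B)" and X="lift (Neg B)"])
      apply (rule ND.Hyp, simp)
     apply (simp add: lift_Neg)
    apply simp
    done
qed

lemma dich_all: "Delta0 B \<Longrightarrow> HA [] (Disj B (Neg B)) \<Longrightarrow> HA \<Gamma> (Disj (BAll t B) (BEx t (Neg B)))"
  using HA_inst[OF dich_all_open, of B \<Gamma> "instf t"] by (simp add: BAll_def BEx_def)

lemma dich_ex: "Delta0 B \<Longrightarrow> HA [] (Disj B (Neg B)) \<Longrightarrow> HA \<Gamma> (Disj (BEx t B) (BAll t (Neg B)))"
  using HA_inst[OF dich_ex_open, of B \<Gamma> "instf t"] by (simp add: BAll_def BEx_def)

lemma Delta0_dec: "Delta0 A \<Longrightarrow> HA [] (Disj A (Neg A))"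
proof (induction rule: Delta0.induct)
  case 1 then show ?case by (rule ND.DisjI2, rule ND.ImpI, rule hyp0)
next
  case (2 s t) then show ?case by (rule dec_eq)
next
  case (3 s t) then show ?case by (rule dec_lt)
next
  case (4 A B)
  show ?case
    apply (rule ND.DisjE[OF "4.IH"(1)])
     apply (rule ND.DisjE[OF ND_nil[OF "4.IH"(2)]])
      apply (rule ND.DisjI1, rule ND.ConjI, rule hyp1, rule hyp0)
     apply (rule ND.DisjI2, rule ND.ImpI, rule ND.ImpE[OF hyp1], rule ND.ConjE2, rule hyp0)
    apply (rule ND.DisjI2, rule ND.ImpI, rule ND.ImpE[OF hyp1], rule ND.ConjE1, rule hyp0)
    done
next
  case (5 A B)
  show ?case
    apply (rule ND.DisjE[OF "5.IH"(1)])
     apply (rule ND.DisjI1, rule ND.DisjI1, rule hyp0)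
    apply (rule ND.DisjE[OF ND_nil[OF "5.IH"(2)]])
     apply (rule ND.DisjI1, rule ND.DisjI2, rule hyp0)
    apply (rule ND.DisjI2, rule ND.ImpI, rule ND.DisjE[OF hyp0])
     apply (rule ND.ImpE[OF hyp3 hyp0])
    apply (rule ND.ImpE[OF hyp2 hyp0])
    done
next
  case (6 A B)
  show ?case
    apply (rule ND.DisjE[OF "6.IH"(1)])
     apply (rule ND.DisjE[OF ND_nil[OF "6.IH"(2)]])
      apply (rule ND.DisjI1, rule ND.ImpI, rule hyp1)
     apply (rule ND.DisjI2, rule ND.ImpI, rule ND.ImpE[OF hyp1], rule ND.ImpE[OF hyp0 hyp2])
    apply (rule ND.DisjI1, rule ND.ImpI, rule ND.BotE, rule ND.ImpE[OF hyp1 hyp0])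
    done
next
  case (7 B t)
  show ?case
    apply (rule ND.DisjE[OF dich_all[OF "7.hyps" "7.IH"]])
     apply (rule ND.DisjI1, rule hyp0)
    apply (rule ND.DisjI2, rule ND.ImpI)
    apply (rule ND.ExE[where A="Conj (Lt (Var 0) (trm_lift t)) (Neg B)"])
     apply (rule ND.Hyp, simp add: BEx_def)
    apply (simp only: lift_Bot)
    apply (rule ND.ImpE[OF ND.ConjE2[OF hyp0]])
    apply (rule ND.ImpE[OF allE_var0[of _ _ _ "Imp (Lt (Var 0) (trm_lift t)) B"]])
     apply (rule ND.Hyp, simp add: BAll_def)
    apply (rule ND.ConjE1[OF hyp0])
    done
next
  case (8 B t)
  show ?case
    apply (rule ND.DisjE[OF dich_ex[OF "8.hyps" "8.IH"]])
     apply (rule ND.DisjI1, rule hyp0)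
    apply (rule ND.DisjI2, rule ND.ImpI)
    apply (rule ND.ExE[where A="Conj (Lt (Var 0) (trm_lift t)) B"])
     apply (rule ND.Hyp, simp add: BEx_def)
    apply (simp only: lift_Bot)
    apply (rule ND.ImpE[OF ND.ImpE[OF allE_var0[of _ _ _ "Imp (Lt (Var 0) (trm_lift t)) (Neg B)"]]])
      apply (rule ND.Hyp, simp add: BAll_def)
     apply (rule ND.ConjE1[OF hyp0])
    apply (rule ND.ConjE2[OF hyp0])
    done
qed



abbreviation NN :: "fm \<Rightarrow> fm \<Rightarrow> fm" where "NN F X \<equiv> Imp (Imp X F) F"

primrec tr :: "fm \<Rightarrow> fm \<Rightarrow> fm" where
  "tr Bot F = F"
| "tr (Eq s t) F = NN F (Eq s t)"
| "tr (Lt s t) F = NN F (Lt s t)"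
| "tr (Conj A B) F = Conj (tr A F) (tr B F)"
| "tr (Disj A B) F = Imp (Conj (Imp (tr A F) F) (Imp (tr B F) F)) F"
| "tr (Imp A B) F = Imp (tr A F) (tr B F)"
| "tr (All A) F = All (tr A (lift F))"
| "tr (Ex A) F = Imp (All (Imp (tr A (lift F)) (lift F))) F"

lemma tr_subst: "fm_subst \<sigma> (tr A F) = tr (fm_subst \<sigma> A) (fm_subst \<sigma> F)"
  by (induction A arbitrary: \<sigma> F) (simp_all add: subst_lift)

lemma tr_lift: "lift (tr A F) = tr (lift A) (lift F)"
  unfolding lift_def by (rule tr_subst)

lemma tr_inst: "inst t (tr A (lift F)) = tr (inst t A) F"
  unfolding inst_def using tr_subst inst_lift by (metis inst_def)

lemma tr_sucf: "fm_subst sucf (tr A (lift F)) = tr (fm_subst sucf A) (lift F)"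
  by (simp add: tr_subst)

lemma tr_ind: "tr (ind_ax C) F = ind_ax (tr C (lift F))"
  unfolding ind_ax_eq by (simp add: tr_inst tr_sucf)

lemma F_tr: "F \<in> set \<Gamma> \<Longrightarrow> ND c T \<Gamma> (tr A F)"
proof (induction A arbitrary: F \<Gamma>)
  case Bot then show ?case by (simp add: ND.Hyp)
next
  case (Eq s t) then show ?case by (simp add: ND.Hyp ND.ImpI)
next
  case (Lt s t) then show ?case by (simp add: ND.Hyp ND.ImpI)
next
  case (Conj A B) then show ?case by (simp add: ND.ConjI)
next
  case (Disj A B) then show ?case by (simp add: ND.Hyp ND.ImpI)
next
  case (Imp A B) then show ?case by (simp add: ND.ImpI)
next
  case (All A) then show ?case by (simp add: ND.AllI)
next
  case (Ex A) then show ?case by (simp add: ND.Hyp ND.ImpI)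
qed

lemma stab_imp: "ND c T \<Gamma> (Imp (NN F (Imp X F)) (Imp X F))"
  apply (rule ND.ImpI, rule ND.ImpI)
  apply (rule ND.ImpE[OF hyp1])
  apply (rule ND.ImpI, rule ND.ImpE[OF hyp0 hyp1])
  done

lemma stab: "ND c T \<Gamma> (Imp (NN F (tr A F)) (tr A F))"
proof (induction A arbitrary: F \<Gamma>)
  case Bot then show ?case
    by simp (rule ND.ImpI, rule ND.ImpE[OF hyp0], rule ND.ImpI, rule hyp0)
next
  case (Eq s t) then show ?case using stab_imp by simp
next
  case (Lt s t) then show ?case using stab_imp by simp
next
  case (Disj A B) then show ?case using stab_imp by simp
next
  case (Ex A) then show ?case using stab_imp by simp
next
  case (Conj A B) show ?case
    apply simp
    apply (rule ND.ImpI, rule ND.ConjI)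
     apply (rule ND.ImpE[OF Conj.IH(1)])
     apply (rule ND.ImpI, rule ND.ImpE[OF hyp1], rule ND.ImpI, rule ND.ImpE[OF hyp1], rule ND.ConjE1, rule hyp0)
    apply (rule ND.ImpE[OF Conj.IH(2)])
    apply (rule ND.ImpI, rule ND.ImpE[OF hyp1], rule ND.ImpI, rule ND.ImpE[OF hyp1], rule ND.ConjE2, rule hyp0)
    done
next
  case (Imp A B) show ?case
    apply simp
    apply (rule ND.ImpI, rule ND.ImpI)
    apply (rule ND.ImpE[OF Imp.IH(2)])
    apply (rule ND.ImpI, rule ND.ImpE[OF hyp2], rule ND.ImpI, rule ND.ImpE[OF hyp1], rule ND.ImpE[OF hyp0 hyp2])
    done
next
  case (All A) show ?case
    apply simp
    apply (rule ND.ImpI, rule ND.AllI)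
    apply (rule ND.ImpE[OF All.IH])
    apply (rule ND.ImpI)
    apply (rule ND.ImpE[where A="Imp (lift (All (tr A (lift F)))) (lift F)"])
     apply (rule ND.Hyp, simp add: lift_Imp)
    apply (rule ND.ImpI, rule ND.ImpE[OF hyp1], rule allE_var0, rule hyp0)
    done
qed

lemma stabE: "ND c T (Imp (tr A F) F # \<Gamma>) F \<Longrightarrow> ND c T \<Gamma> (tr A F)"
  by (rule ND.ImpE[OF stab], rule ND.ImpI)



lemma wkl: "ND c T (A # \<Gamma>) B \<Longrightarrow> ND c T (A # C # \<Gamma>) B" by (erule ND_weaken) auto

lemma main_tr0:
  assumes "ND c T \<Gamma> A"
    and ax: "\<And>A \<Delta> F. A \<in> axioms0 \<Longrightarrow> Sigma1 F \<Longrightarrow> HA \<Delta> (tr A F)"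
    and "Sigma1 F" and "T = axioms0"
  shows "ND False T (map (\<lambda>X. tr X F) \<Gamma>) (tr A F)"
  using assms(1,3,4)
proof (induction arbitrary: F rule: ND.induct)
  case (Hyp A \<Gamma> c T) then show ?case by (auto intro: ND.Hyp)
next
  case (Ax A) then show ?case using ax by auto
next
  case (BotE c T \<Gamma> A)
  then have "ND False T (map (\<lambda>X. tr X F) \<Gamma>) F" by simp
  then show ?case by (rule cut) (rule F_tr, simp)
next
  case (LEM c T \<Gamma> A) show ?case
    by simp (rule ND.ImpI, rule ND.ImpE[OF ND.ConjE2[OF hyp0] ND.ConjE1[OF hyp0]])
next
  case (ConjI c T \<Gamma> A B) then show ?case by (simp add: ND.ConjI)
next
  case (ConjE1 c T \<Gamma> A B) then show ?case by (auto intro: ND.ConjE1)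
next
  case (ConjE2 c T \<Gamma> A B) then show ?case by (auto intro: ND.ConjE2)
next
  case (DisjI1 c T \<Gamma> A B) then show ?case
    by simp (rule ND.ImpI, rule ND.ImpE[OF ND.ConjE1[OF hyp0]], rule wk, simp)
next
  case (DisjI2 c T \<Gamma> B A) then show ?case
    by simp (rule ND.ImpI, rule ND.ImpE[OF ND.ConjE2[OF hyp0]], rule wk, simp)
next
  case (DisjE c T \<Gamma> A B C)
  have d: "ND False T (map (\<lambda>X. tr X F) \<Gamma>) (tr (Disj A B) F)" using DisjE by blast
  have a: "ND False T (tr A F # map (\<lambda>X. tr X F) \<Gamma>) (tr C F)" using DisjE by simp
  have b: "ND False T (tr B F # map (\<lambda>X. tr X F) \<Gamma>) (tr C F)" using DisjE by simp
  show ?case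
    apply (rule stabE)
    apply (rule ND.ImpE[OF wk[OF d[simplified]]])
    apply (rule ND.ConjI)
     apply (rule ND.ImpI, rule ND.ImpE[OF hyp1], rule wkl[OF a])
    apply (rule ND.ImpI, rule ND.ImpE[OF hyp1], rule wkl[OF b])
    done
next
  case (ImpI c T A \<Gamma> B) then show ?case by (simp add: ND.ImpI)
next
  case (ImpE c T \<Gamma> A B) then show ?case by (auto intro: ND.ImpE)
next
  case (AllI c T \<Gamma> A)
  have "ND False T (map (\<lambda>X. tr X (lift F)) (map lift \<Gamma>)) (tr A (lift F))"
    using AllI Sigma1_lift by blast
  moreover have "map (\<lambda>X. tr X (lift F)) (map lift \<Gamma>) = map lift (map (\<lambda>X. tr X F) \<Gamma>)"
    by (simp add: tr_lift)
  ultimately have "ND False T (map lift (map (\<lambda>X. tr X F) \<Gamma>)) (tr A (lift F))" by metis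
  then show ?case by (simp only: tr.simps) (rule ND.AllI)
next
  case (AllE c T \<Gamma> A t)
  then have "ND False T (map (\<lambda>X. tr X F) \<Gamma>) (All (tr A (lift F)))" by simp
  then have "ND False T (map (\<lambda>X. tr X F) \<Gamma>) (inst t (tr A (lift F)))" by (rule ND.AllE)
  then show ?case by (simp add: tr_inst)
next
  case (ExI c T \<Gamma> t A)
  then have i: "ND False T (map (\<lambda>X. tr X F) \<Gamma>) (tr (inst t A) F)" by simp
  have "ND False T (All (Imp (tr A (lift F)) (lift F)) # map (\<lambda>X. tr X F) \<Gamma>) (inst t (Imp (tr A (lift F)) (lift F)))"
    by (rule ND.AllE, rule hyp0)
  then have "ND False T (All (Imp (tr A (lift F)) (lift F)) # map (\<lambda>X. tr X F) \<Gamma>) (Imp (tr (inst t A) F) F)"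
    by (simp add: tr_inst)
  then show ?case by simp (rule ND.ImpI, rule ND.ImpE, assumption, rule wk[OF i])
next
  case (ExE c T \<Gamma> A B)
  have e: "ND False T (map (\<lambda>X. tr X F) \<Gamma>) (tr (Ex A) F)" using ExE by blast
  have "ND False T (map (\<lambda>X. tr X (lift F)) (A # map lift \<Gamma>)) (tr (lift B) (lift F))"
    using ExE Sigma1_lift by blast
  moreover have cm: "(\<lambda>X. tr X (lift F)) \<circ> lift = lift \<circ> (\<lambda>X. tr X F)" by (rule ext) (simp add: tr_lift)
  ultimately have b: "ND False T (tr A (lift F) # map lift (map (\<lambda>X. tr X F) \<Gamma>)) (lift (tr B F))"
    by (simp add: tr_lift)
  show ?case
    apply (rule stabE)
    apply (rule ND.ImpE[OF wk[OF e[simplified]]])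
    apply (rule ND.AllI, simp only: list.map, rule ND.ImpI)
    apply (rule ND.ImpE[where A="lift (tr B F)"])
     apply (rule ND.Hyp, simp add: lift_Imp)
    apply (rule ND_weaken[OF b], auto)
    done
next
  case (EqRefl c T \<Gamma> t) show ?case
    by simp (rule ND.ImpI, rule ND.ImpE[OF hyp0 ND.EqRefl])
next
  case (EqSubst c T \<Gamma> s t A)
  have e: "ND False T (map (\<lambda>X. tr X F) \<Gamma>) (NN F (Eq s t))" using EqSubst by simp
  have a: "ND False T (map (\<lambda>X. tr X F) \<Gamma>) (inst s (tr A (lift F)))" using EqSubst by (simp add: tr_inst)
  have "ND False T (Eq s t # Imp (tr (inst t A) F) F # map (\<lambda>X. tr X F) \<Gamma>) (inst t (tr A (lift F)))"
    by (rule ND.EqSubst[OF hyp0 wk2[OF a]])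
  then have x: "ND False T (Eq s t # Imp (tr (inst t A) F) F # map (\<lambda>X. tr X F) \<Gamma>) (tr (inst t A) F)"
    by (simp add: tr_inst)
  show ?case
    apply (rule stabE)
    apply (rule ND.ImpE[OF wk[OF e]])
    apply (rule ND.ImpI, rule ND.ImpE[OF hyp1 x])
    done
qed

lemma main_tr:
  assumes "ND True axioms0 \<Gamma> A"
    and "\<And>A \<Delta> F. A \<in> axioms0 \<Longrightarrow> Sigma1 F \<Longrightarrow> HA \<Delta> (tr A F)"
    and "Sigma1 F"
  shows "HA (map (\<lambda>X. tr X F) \<Gamma>) (tr A F)"
  using main_tr0[OF assms] by simp



abbreviation eqv :: "fm \<Rightarrow> fm \<Rightarrow> bool" where "eqv A G \<equiv> HA [] (Iff (tr A G) (NN G A))"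

lemma to_nn: "eqv A G \<Longrightarrow> HA \<Gamma> (tr A G) \<Longrightarrow> HA \<Gamma> (NN G A)"
  by (rule iffD1'[OF ND_nil])
lemma from_nn: "eqv A G \<Longrightarrow> HA \<Gamma> (NN G A) \<Longrightarrow> HA \<Gamma> (tr A G)"
  by (rule iffD2'[OF ND_nil])

lemma iffI': "ND c T (A # \<Gamma>) B \<Longrightarrow> ND c T (B # \<Gamma>) A \<Longrightarrow> ND c T \<Gamma> (Iff A B)"
  by (rule ND.ConjI; rule ND.ImpI)

lemma bot_eqv: "eqv Bot G"
  apply simp
  apply (rule iffI')
   apply (rule ND.ImpI, rule hyp1)
  apply (rule ND.ImpE[OF hyp0], rule ND.ImpI, rule ND.BotE, rule hyp0)
  done

lemma atom_eqv: "eqv (Eq s t) G" "eqv (Lt s t) G"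
  by (simp only: tr.simps, rule iffI', rule hyp0, rule hyp0)+

lemma conj_eqv: "eqv A G \<Longrightarrow> eqv B G \<Longrightarrow> eqv (Conj A B) G"
  apply (simp only: tr.simps)
  apply (rule iffI')
   apply (rule ND.ImpI)
   apply (rule ND.ImpE[OF to_nn[where A=A]], assumption, rule ND.ConjE1, rule hyp1)
   apply (rule ND.ImpI)
   apply (rule ND.ImpE[OF to_nn[where A=B]], assumption, rule ND.ConjE2, rule hyp2)
   apply (rule ND.ImpI)
   apply (rule ND.ImpE[OF hyp2], rule ND.ConjI, rule hyp1, rule hyp0)
  apply (rule ND.ConjI)
   apply (rule from_nn, assumption, rule ND.ImpI, rule ND.ImpE[OF hyp1], rule ND.ImpI, rule ND.ImpE[OF hyp1], rule ND.ConjE1, rule hyp0)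
  apply (rule from_nn, assumption, rule ND.ImpI, rule ND.ImpE[OF hyp1], rule ND.ImpI, rule ND.ImpE[OF hyp1], rule ND.ConjE2, rule hyp0)
  done

lemma disj_eqv: "eqv A G \<Longrightarrow> eqv B G \<Longrightarrow> eqv (Disj A B) G"
  apply (simp only: tr.simps)
  apply (rule iffI')
   apply (rule ND.ImpI)
   apply (rule ND.ImpE[OF hyp1], rule ND.ConjI)
    apply (rule ND.ImpI, rule ND.ImpE[OF to_nn[where A=A]], assumption, rule hyp0)
    apply (rule ND.ImpI, rule ND.ImpE[OF hyp2], rule ND.DisjI1, rule hyp0)
   apply (rule ND.ImpI, rule ND.ImpE[OF to_nn[where A=B]], assumption, rule hyp0)
   apply (rule ND.ImpI, rule ND.ImpE[OF hyp2], rule ND.DisjI2, rule hyp0)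
  apply (rule ND.ImpI, rule ND.ImpE[OF hyp1], rule ND.ImpI, rule ND.DisjE[OF hyp0])
   apply (rule ND.ImpE[OF ND.ConjE1[OF hyp2]], rule from_nn, assumption, rule ND.ImpI, rule ND.ImpE[OF hyp0 hyp1])
  apply (rule ND.ImpE[OF ND.ConjE2[OF hyp2]], rule from_nn, assumption, rule ND.ImpI, rule ND.ImpE[OF hyp0 hyp1])
  done

lemma imp_eqv: "HA [] (Disj A (Neg A)) \<Longrightarrow> eqv A G \<Longrightarrow> eqv B G \<Longrightarrow> eqv (Imp A B) G"
  apply (simp only: tr.simps)
  apply (rule iffI')
   apply (rule ND.ImpI)
   apply (rule ND.DisjE[OF ND_nil], assumption)
    apply (rule ND.ImpE[OF to_nn[where A=B]], assumption)
     apply (rule ND.ImpE[OF hyp2], rule from_nn, assumption, rule ND.ImpI, rule ND.ImpE[OF hyp0 hyp1])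
    apply (rule ND.ImpI, rule ND.ImpE[OF hyp2], rule ND.ImpI, rule hyp1)
   apply (rule ND.ImpE[OF hyp1], rule ND.ImpI, rule ND.BotE, rule ND.ImpE[OF hyp1 hyp0])
  apply (rule ND.ImpI, rule from_nn, assumption)
  apply (rule ND.ImpI, rule ND.ImpE[OF hyp2], rule ND.ImpI)
  apply (rule ND.ImpE[OF to_nn[where A=A]], assumption, rule hyp2)
  apply (rule ND.ImpI, rule ND.ImpE[OF hyp2], rule ND.ImpE[OF hyp1 hyp0])
  done

lemma ex_eqv: "(\<And>G. eqv A G) \<Longrightarrow> eqv (Ex A) G"
  apply (simp only: tr.simps)
  apply (rule iffI')
   apply (rule ND.ImpI)
   apply (rule ND.ImpE[OF hyp1], rule ND.AllI, rule ND.ImpI)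
   apply (rule ND.ImpE[OF to_nn[where G="lift G"]], assumption, rule hyp0)
   apply (rule ND.ImpI)
   apply (rule ND.ImpE[where A="lift (Ex A)"])
    apply (rule ND.Hyp, simp add: lift_Imp)
   apply (rule exI_var0, rule hyp0)
  apply (rule ND.ImpI)
  apply (rule ND.ImpE[OF hyp1], rule ND.ImpI)
  apply (rule ND.ExE[OF hyp0])
  apply (rule ND.ImpE[OF allE_var0[where A="Imp (tr A (lift G)) (lift G)"]])
   apply (rule ND.Hyp, simp)
  apply (rule from_nn, assumption, rule ND.ImpI, rule ND.ImpE[OF hyp0 hyp1])
  done

lemma ball_eqv: "Delta0 B \<Longrightarrow> (\<And>G. eqv B G) \<Longrightarrow> eqv (BAll t B) G"
  apply (unfold BAll_def)
  apply (subst tr.simps)+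
  apply (rule iffI')
   apply (rule ND.DisjE[OF dich_all[of B _ t]], assumption, rule Delta0_dec, assumption)
    apply (rule ND.ImpI, rule ND.ImpE[OF hyp0], rule ND.Hyp, simp add: BAll_def)
   apply (rule ND.ImpI)
   apply (rule ND.ExE[where A="Conj (Lt (Var 0) (trm_lift t)) (Neg B)"])
    apply (rule ND.Hyp, simp add: BEx_def)
   apply (rule ND.ImpE[OF to_nn[where A=B and G="lift G"]], assumption)
    apply (rule ND.ImpE[OF allE_var0[where A="Imp (tr (Lt (Var 0) (trm_lift t)) (lift G)) (tr B (lift G))"]])
     apply (rule ND.Hyp, simp)
    apply (simp only: tr.simps)
    apply (rule ND.ImpI, rule ND.ImpE[OF hyp0], rule ND.ConjE1, rule hyp1)
   apply (rule ND.ImpI, rule ND.BotE, rule ND.ImpE[OF ND.ConjE2[OF hyp1] hyp0])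
  apply (rule ND.AllI, simp only: list.map tr.simps, rule ND.ImpI)
  apply (rule from_nn, assumption)
  apply (rule ND.ImpI, rule ND.ImpE[OF hyp1], rule ND.ImpI)
  apply (rule ND.ImpE[where A="Imp (lift (All (Imp (Lt (Var 0) (trm_lift t)) B))) (lift G)"])
   apply (rule ND.Hyp, simp add: lift_Imp)
  apply (rule ND.ImpI, rule ND.ImpE[OF hyp2])
  apply (rule ND.ImpE[OF allE_var0[OF hyp0] hyp1])
  done

lemma Delta0_eqv: "Delta0 A \<Longrightarrow> eqv A G"
proof (induction arbitrary: G rule: Delta0.induct)
  case 1 then show ?case by (rule bot_eqv)
next
  case (2 s t) then show ?case by (rule atom_eqv)
next
  case (3 s t) then show ?case by (rule atom_eqv)
next
  case (4 A B) then show ?case by (intro conj_eqv "4.IH")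
next
  case (5 A B) then show ?case by (intro disj_eqv "5.IH")
next
  case (6 A B) then show ?case by (intro imp_eqv Delta0_dec "6.IH" "6.hyps")
next
  case (7 B t) then show ?case by (intro ball_eqv "7.IH" "7.hyps")
next
  case (8 B t) then show ?case unfolding BEx_def by (intro ex_eqv conj_eqv atom_eqv "8.IH")
qed

lemma Sigma1_eqv: "Sigma1 A \<Longrightarrow> eqv A G"
proof (induction arbitrary: G rule: Sigma1.induct)
  case (1 A) then show ?case by (rule Delta0_eqv)
next
  case (2 A) then show ?case by (intro ex_eqv "2.IH")
qed



lemma iff_refl: "ND c T \<Gamma> (Iff X X)" by (rule iffI'; rule hyp0)

lemma iff_trans: "HA [] (Iff X Y) \<Longrightarrow> HA [] (Iff Y Z) \<Longrightarrow> HA [] (Iff X Z)"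
  apply (rule iffI')
   apply (rule iffD1'[OF ND_nil], assumption, rule iffD1'[OF ND_nil], assumption, rule hyp0)
  apply (rule iffD2'[OF ND_nil], assumption, rule iffD2'[OF ND_nil], assumption, rule hyp0)
  done

lemma ex_cong: "HA [] (Iff X Y) \<Longrightarrow> HA [] (Iff (Ex X) (Ex Y))"
  apply (rule iffI')
   apply (rule ND.ExE[OF hyp0], rule exI_var0, rule iffD1'[OF ND_nil], assumption, rule hyp0)
  apply (rule ND.ExE[OF hyp0], rule exI_var0, rule iffD2'[OF ND_nil], assumption, rule hyp0)
  done

lemma exdisj_l: "HA [] (Iff (Ex (Disj A (lift B))) (Disj (Ex A) B))"
  apply (rule iffI')
   apply (rule ND.ExE[OF hyp0], simp only: lift_Disj)
   apply (rule ND.DisjE[OF hyp0])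
    apply (rule ND.DisjI1, rule exI_var0, rule hyp0)
   apply (rule ND.DisjI2, rule hyp0)
  apply (rule ND.DisjE[OF hyp0])
   apply (rule ND.ExE[OF hyp0], rule exI_var0, rule ND.DisjI1, rule hyp0)
  apply (rule ND.ExI[where t=Zero], simp, rule ND.DisjI2, rule hyp0)
  done

lemma exdisj_r: "HA [] (Iff (Ex (Disj (lift A) B)) (Disj A (Ex B)))"
  apply (rule iffI')
   apply (rule ND.ExE[OF hyp0], simp only: lift_Disj)
   apply (rule ND.DisjE[OF hyp0])
    apply (rule ND.DisjI1, rule hyp0)
   apply (rule ND.DisjI2, rule exI_var0, rule hyp0)
  apply (rule ND.DisjE[OF hyp0])
   apply (rule ND.ExI[where t=Zero], simp, rule ND.DisjI1, rule hyp0)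
  apply (rule ND.ExE[OF hyp0], rule exI_var0, rule ND.DisjI2, rule hyp0)
  done

lemma Delta0_lift: "Delta0 D \<Longrightarrow> Delta0 (lift D)" by (simp add: lift_def Delta0_subst)

lemma prenex_d0: "Sigma1 E \<Longrightarrow> Delta0 D \<Longrightarrow> \<exists>X. Sigma1 X \<and> HA [] (Iff X (Disj D E))"
proof (induction arbitrary: D rule: Sigma1.induct)
  case (1 E) then show ?case by (intro exI[of _ "Disj D E"] conjI iff_refl D0S Delta0.intros)
next
  case (2 E)
  then obtain X where "Sigma1 X" "HA [] (Iff X (Disj (lift D) E))" using Delta0_lift by blast
  then show ?case
    by (intro exI[of _ "Ex X"] conjI Sigma1.intros(2) iff_trans[OF ex_cong exdisj_r])
qed

lemma prenex: "Sigma1 D \<Longrightarrow> Sigma1 E \<Longrightarrow> \<exists>X. Sigma1 X \<and> HA [] (Iff X (Disj D E))"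
proof (induction arbitrary: E rule: Sigma1.induct)
  case (1 D) then show ?case using prenex_d0 by blast
next
  case (2 D)
  then obtain X where "Sigma1 X" "HA [] (Iff X (Disj D (lift E)))" using Sigma1_lift by blast
  then show ?case
    by (intro exI[of _ "Ex X"] conjI Sigma1.intros(2) iff_trans[OF ex_cong exdisj_l])
qed

lemma ind_eqv:
  assumes eD: "eqv D G" and eE: "eqv E G" and X: "HA [] (Iff X (Disj D E))"
  shows "HA [] (Iff (tr (Imp (Imp D E) E) G) (NN G X))"
  apply (simp only: tr.simps)
  apply (rule iffI')
   apply (rule ND.ImpI)
   apply (rule ND.ImpE[OF to_nn[OF eE]])
    apply (rule ND.ImpE[OF hyp1])
    apply (rule ND.ImpI, rule from_nn[OF eE], rule ND.ImpI)
    apply (rule ND.ImpE[OF to_nn[OF eD hyp1]])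
    apply (rule ND.ImpI, rule ND.ImpE[OF hyp3], rule iffD2'[OF ND_nil[OF X]], rule ND.DisjI1, rule hyp0)
   apply (rule ND.ImpI, rule ND.ImpE[OF hyp1], rule iffD2'[OF ND_nil[OF X]], rule ND.DisjI2, rule hyp0)
  apply (rule ND.ImpI, rule from_nn[OF eE], rule ND.ImpI)
  apply (rule ND.ImpE[OF hyp2], rule ND.ImpI)
  apply (rule ND.DisjE[OF iffD1'[OF ND_nil[OF X] hyp0]])
   apply (rule ND.ImpE[OF to_nn[OF eE]])
    apply (rule ND.ImpE[OF hyp3], rule from_nn[OF eD], rule ND.ImpI, rule ND.ImpE[OF hyp0 hyp1])
   apply (rule hyp2)
  apply (rule ND.ImpE[OF hyp2 hyp0])
  done

lemma tr_ind_ok: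
  assumes D: "Sigma1 D" and E: "Sigma1 E" and G: "Sigma1 G"
  shows "HA \<Delta> (ind_ax (tr (Imp (Imp D E) E) G))"
proof -
  obtain X where X: "Sigma1 X" "HA [] (Iff X (Disj D E))" using prenex[OF D E] by blast
  have "HA \<Delta> (ind_ax (Imp (Imp X G) G))"
    by (rule ND.Ax) (unfold axioms0_def, rule UnI2, use X G in blast)
  then show ?thesis
    by (rule ind_transfer[OF ind_eqv[OF Sigma1_eqv[OF D] Sigma1_eqv[OF E] X(2)]])
qed

lemma nn_intro: "HA \<Gamma> X \<Longrightarrow> HA \<Gamma> (NN F X)"
  by (rule ND.ImpI, rule ND.ImpE[OF hyp0], erule wk)

lemma tr_basic: "A \<in> basic_ax \<Longrightarrow> HA \<Gamma> (tr A F)"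
proof -
  assume A: "A \<in> basic_ax"
  then have ax: "HA \<Delta> A" for \<Delta> by (intro ND.Ax) (simp add: axioms0_def)
  from A show ?thesis unfolding basic_ax_def
  proof (elim insertE emptyE)
    assume a: "A = Neg (Eq (Suc' vx) Zero)"
    show ?thesis unfolding a
      apply (simp only: tr.simps)
      apply (rule ND.ImpI, rule ND.ImpE[OF hyp0], rule ND.ImpI, rule ND.BotE)
      apply (rule ND.ImpE[OF ax[unfolded a]], rule hyp0)
      done
  next
    assume a: "A = Imp (Eq (Suc' vx) (Suc' vy)) (Eq vx vy)"
    show ?thesis unfolding a
      apply (simp only: tr.simps)
      apply (rule ND.ImpI, rule ND.ImpI, rule ND.ImpE[OF hyp1], rule ND.ImpI)
      apply (rule ND.ImpE[OF hyp1], rule ND.ImpE[OF ax[unfolded a]], rule hyp0)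
      done
  next
    assume a: "A = Eq (Plus vx Zero) vx"
    show ?thesis unfolding a using ax[unfolded a] by (simp only: tr.simps) (rule nn_intro)
  next
    assume a: "A = Eq (Plus vx (Suc' vy)) (Suc' (Plus vx vy))"
    show ?thesis unfolding a using ax[unfolded a] by (simp only: tr.simps) (rule nn_intro)
  next
    assume a: "A = Eq (Times vx Zero) Zero"
    show ?thesis unfolding a using ax[unfolded a] by (simp only: tr.simps) (rule nn_intro)
  next
    assume a: "A = Eq (Times vx (Suc' vy)) (Plus (Times vx vy) vx)"
    show ?thesis unfolding a using ax[unfolded a] by (simp only: tr.simps) (rule nn_intro)
  next
    assume a: "A = Neg (Lt vx Zero)"
    show ?thesis unfolding a
      apply (simp only: tr.simps)
      apply (rule ND.ImpI, rule ND.ImpE[OF hyp0], rule ND.ImpI, rule ND.BotE)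
      apply (rule ND.ImpE[OF ax[unfolded a]], rule hyp0)
      done
  next
    assume a: "A = Iff (Lt vx (Suc' vy)) (Disj (Lt vx vy) (Eq vx vy))"
    have ax1: "HA \<Delta> (Imp (Lt vx (Suc' vy)) (Disj (Lt vx vy) (Eq vx vy)))" for \<Delta>
      using ax[unfolded a] by (rule ND.ConjE1)
    have ax2: "HA \<Delta> (Imp (Disj (Lt vx vy) (Eq vx vy)) (Lt vx (Suc' vy)))" for \<Delta>
      using ax[unfolded a] by (rule ND.ConjE2)
    show ?thesis unfolding a
      apply (simp only: tr.simps)
      apply (rule ND.ConjI)
       apply (rule ND.ImpI, rule ND.ImpI, rule ND.ImpE[OF hyp1], rule ND.ImpI)
       apply (rule ND.DisjE[OF ND.ImpE[OF ax1 hyp0]])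
        apply (rule ND.ImpE[OF ND.ConjE1[OF hyp2]], rule ND.ImpI, rule ND.ImpE[OF hyp0 hyp1])
       apply (rule ND.ImpE[OF ND.ConjE2[OF hyp2]], rule ND.ImpI, rule ND.ImpE[OF hyp0 hyp1])
      apply (rule ND.ImpI, rule ND.ImpI, rule ND.ImpE[OF hyp1], rule ND.ConjI)
       apply (rule ND.ImpI, rule ND.ImpE[OF hyp0], rule ND.ImpI, rule ND.ImpE[OF hyp2])
       apply (rule ND.ImpE[OF ax2], rule ND.DisjI1, rule hyp0)
      apply (rule ND.ImpI, rule ND.ImpE[OF hyp0], rule ND.ImpI, rule ND.ImpE[OF hyp2])
      apply (rule ND.ImpE[OF ax2], rule ND.DisjI2, rule hyp0)
      done
  qed
qed

lemma tr_ax: "A \<in> axioms0 \<Longrightarrow> Sigma1 F \<Longrightarrow> HA \<Delta> (tr A F)"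
proof -
  assume A: "A \<in> axioms0" and F: "Sigma1 F"
  show ?thesis
  proof (cases "A \<in> basic_ax")
    case True then show ?thesis by (rule tr_basic)
  next
    case False
    then obtain D E where "A = ind_ax (Imp (Imp D E) E)" "Sigma1 D" "Sigma1 E" using A by (auto simp: axioms0_def)
    then show ?thesis using tr_ind_ok[of D E "lift F" \<Delta>] Sigma1_lift[OF F] by (simp only: tr_ind)
  qed
qed

theorem lemma3p4:
  shows "(\<forall>A. Sigma1 A \<longrightarrow> PA0_proves A \<longrightarrow> HA0_proves A) \<and>
         (\<forall>A. Pi2 A \<longrightarrow> sentence A \<longrightarrow> PA0_proves A \<longrightarrow> HA0_proves A)"
proof -
  have p1: "HA0_proves A" if S: "Sigma1 A" and P: "PA0_proves A" for A
  proof -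
    have "HA (map (\<lambda>X. tr X A) []) (tr A A)"
      by (rule main_tr[OF P[unfolded PA0_proves_def] tr_ax S])
    then have "HA [] (NN A A)" by (intro to_nn[OF Sigma1_eqv[OF S]]) simp
    then have "HA [] A" by (rule ND.ImpE) (rule ND.ImpI, rule hyp0)
    then show ?thesis by (simp add: HA0_proves_def)
  qed
  have p2: "PA0_proves A \<longrightarrow> HA0_proves A" if "Pi2 A" for A
    using that
  proof (induction rule: Pi2.induct)
    case (1 A) then show ?case using p1 by blast
  next
    case (2 A)
    show ?case
    proof
      assume "PA0_proves (All A)"
      then have "ND True axioms0 (map lift []) A" unfolding PA0_proves_def by (rule all_open)
      then have "HA0_proves A" using 2 by (simp add: PA0_proves_def)
      then show "HA0_proves (All A)" unfolding HA0_proves_def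
        using ND.AllI[of False axioms0 "[]" A] by simp
    qed
  qed
  show ?thesis using p1 p2 by blast
qed


end
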